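(* Every abelian group equipped with its Bohr topology is hereditarily $g$-reversible.
   Context: All topological groups are assumed Hausdorff. A topological group $G$ is called $g$-reversible if every continuous automorphism of $G$ (i.e. every continuous group isomorphism of $G$ onto itself) is an open map. A topological group is hereditarily $g$-reversible if every subgroup of it is $g$-reversible in the subspace topology. The Bohr topology of an abelian group $G$ is the coarsest topology on $G$ making all homomorphisms $G\to\mathbb{T}=\mathbb{R}/\mathbb{Z}$ continuous; it is the strongest precompact group topology on $G$. *)

theory Defs
  imports "HOL-Analysis.Analysis" "HOL-Algebra.Algebra"
begin

text \<open>The circle group T = R/Z, realised (isomorphically, as a topological group)
  as the unit circle in the complex plane under multiplication.\<close>
definition circle_group :: "complex monoid" where
  "circle_group = \<lparr>carrier = sphere 0 1, mult = (*), one = 1\<rparr>"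

definition bohr_topology :: "('a, 'b) monoid_scheme \<Rightarrow> 'a topology" where
  "bohr_topology G = topology_generated_by
     {{x \<in> carrier G. chi x \<in> U} | chi U. chi \<in> hom G circle_group \<and> open U}"

definition g_reversible :: "('a, 'b) monoid_scheme \<Rightarrow> 'a topology \<Rightarrow> bool" where
  "g_reversible G T \<longleftrightarrow>
     (\<forall>f. f \<in> iso G G \<and> continuous_map T T f \<longrightarrow> open_map T T f)"

definition hereditarily_g_reversible :: "('a, 'b) monoid_scheme \<Rightarrow> 'a topology \<Rightarrow> bool" where
  "hereditarily_g_reversible G T \<longleftrightarrow>
     (\<forall>H. subgroup H G \<longrightarrow> g_reversible (G\<lparr>carrier := H\<rparr>) (subtopology T H))"

end

theory Submission
  imports Defs
begin



definition good :: "('a,'b) monoid_scheme \<Rightarrow> 'a set \<Rightarrow> ('a \<Rightarrow> complex) \<Rightarrow> ('a \<times> complex) set \<Rightarrow> bool" where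
"good G H psi R \<longleftrightarrow> (\<forall>x y y'. (x,y)\<in>R \<longrightarrow> (x,y')\<in>R \<longrightarrow> y=y') \<and> Domain R \<subseteq> carrier G
   \<and> (\<forall>x\<in>H. (x, psi x)\<in>R) \<and> (\<forall>x y. (x,y)\<in>R \<longrightarrow> cmod y = 1)
   \<and> (\<forall>x y x' y'. (x,y)\<in>R \<longrightarrow> (x',y')\<in>R \<longrightarrow> (x \<otimes>\<^bsub>G\<^esub> x', y*y')\<in>R)
   \<and> (\<forall>x y. (x,y)\<in>R \<longrightarrow> (inv\<^bsub>G\<^esub> x, inverse y)\<in>R)"

lemma good_sv: "good G H psi R \<Longrightarrow> (x,y)\<in>R \<Longrightarrow> (x,y')\<in>R \<Longrightarrow> y=y'"
  unfolding good_def by blast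
lemma good_dom: "good G H psi R \<Longrightarrow> (x,y)\<in>R \<Longrightarrow> x \<in> carrier G"
  unfolding good_def by blast
lemma good_H: "good G H psi R \<Longrightarrow> x \<in> H \<Longrightarrow> (x, psi x)\<in>R"
  unfolding good_def by blast
lemma good_cmod: "good G H psi R \<Longrightarrow> (x,y)\<in>R \<Longrightarrow> cmod y = 1"
  unfolding good_def by blast
lemma good_mult: "good G H psi R \<Longrightarrow> (x,y)\<in>R \<Longrightarrow> (x',y')\<in>R \<Longrightarrow> (x \<otimes>\<^bsub>G\<^esub> x', y*y')\<in>R"
  unfolding good_def by blast
lemma good_inv: "good G H psi R \<Longrightarrow> (x,y)\<in>R \<Longrightarrow> (inv\<^bsub>G\<^esub> x, inverse y)\<in>R"
  unfolding good_def by blast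

context comm_group begin

lemma good_one:
  assumes "good G H psi M" "(x,y) \<in> M"
  shows "(\<one>, 1) \<in> M"
proof -
  have x: "x \<in> carrier G" using assms unfolding good_def by blast
  have "cmod y = 1" using assms unfolding good_def by blast
  hence "y \<noteq> 0" by auto
  have "(inv x, inverse y) \<in> M" using assms unfolding good_def by blast
  hence "(x \<otimes> inv x, y * inverse y) \<in> M" using assms unfolding good_def by blast
  thus ?thesis using x \<open>y \<noteq> 0\<close> by simp
qed

lemma good_nat_pow:
  assumes "good G H psi M" "(x,y) \<in> M"
  shows "(x [^] (n::nat), y ^ n) \<in> M"
proof (induction n)
  case 0
  then show ?case using good_one[OF assms] by simp
next
  case (Suc n)
  have "(x [^] n \<otimes> x, y^n * y) \<in> M" using Suc assms unfolding good_def by blast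
  then show ?case by (simp add: mult.commute)
qed

lemma good_int_pow:
  assumes "good G H psi M" "(x,y) \<in> M"
  shows "(x [^] (j::int), y powi j) \<in> M"
proof (cases "j < 0")
  case True
  have "(x [^] nat (-j), y ^ nat (-j)) \<in> M" using good_nat_pow[OF assms] .
  hence "(inv (x [^] nat (-j)), inverse (y ^ nat (-j))) \<in> M" using assms unfolding good_def by blast
  moreover have "x [^] j = inv (x [^] nat (-j))" using True by (simp only: int_pow_def2 if_True)
  moreover have "y powi j = inverse (y ^ nat (-j))" using True
    by (simp only: power_int_def power_inverse not_le[symmetric] if_False) 
  ultimately show ?thesis by simp
next
  case False
  have "x [^] j = x [^] nat j" using False by (simp only: int_pow_def2 if_False)
  moreover have "y powi j = y ^ nat j" using False by (simp only: power_int_def not_less if_True)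
  ultimately show ?thesis using good_nat_pow[OF assms, of "nat j"] by simp
qed

end



lemma circle_root:
  assumes "cmod (c::complex) = 1" "0 < n"
  shows "\<exists>w. cmod w = 1 \<and> w ^ n = c"
proof -
  have "c \<noteq> 0" using assms by auto
  from bij_betw_nth_root_unity[OF this assms(2)]
  have "{z. z ^ n = c} = (*) (complex_of_real (root n (cmod c)) * cis (Arg c / real n)) ` {z. z ^ n = 1}"
    by (simp add: bij_betw_def)
  moreover have "(1::complex) \<in> {z. z ^ n = 1}" by simp
  ultimately have "complex_of_real (root n (cmod c)) * cis (Arg c / real n) * 1 \<in> {z. z ^ n = c}"
    by (metis image_eqI)
  hence "complex_of_real (root n (cmod c)) * cis (Arg c / real n) \<in> {z. z ^ n = c}" by simp
  moreover have "cmod (complex_of_real (root n (cmod c)) * cis (Arg c / real n)) = 1"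
    using assms by (simp add: norm_mult)
  ultimately show ?thesis by blast
qed

context comm_group begin

lemma good_w:
  assumes g: "good G H psi M" and a: "a \<in> carrier G"
  shows "\<exists>w. cmod w = 1 \<and> (\<forall>j c. (a [^] (j::int), c) \<in> M \<longrightarrow> c = w powi j)"
proof (cases "\<exists>m::nat. 0 < m \<and> a [^] m \<in> Domain M")
  case True
  define n where "n = (LEAST m::nat. 0 < m \<and> a [^] m \<in> Domain M)"
  have n: "0 < n \<and> a [^] n \<in> Domain M" unfolding n_def using LeastI_ex[OF True] .
  have nmin: "\<And>m::nat. 0 < m \<Longrightarrow> a [^] m \<in> Domain M \<Longrightarrow> n \<le> m" unfolding n_def by (simp add: Least_le)
  obtain c0 where c0: "(a [^] n, c0) \<in> M" using n by auto
  have "cmod c0 = 1" using g c0 unfolding good_def by blast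
  then obtain w where w: "cmod w = 1" "w ^ n = c0" using circle_root n by blast
  show ?thesis
  proof (intro exI conjI allI impI)
    show "cmod w = 1" by fact
    fix j c assume jc: "(a [^] (j::int), c) \<in> M"
    define q where "q = j div int n"
    define r where "r = j mod int n"
    have jqr: "j = int n * q + r" unfolding q_def r_def by simp
    have r0: "0 \<le> r" "r < int n" using n unfolding r_def by auto
    have an: "(a [^] int n, c0) \<in> M" using c0 by (simp only: int_pow_int)
    have P: "(a [^] (int n * q), c0 powi q) \<in> M"
      using good_int_pow[OF g an, of q] by (simp only: int_pow_pow[OF a])
    have "(inv (a [^] (int n * q)), inverse (c0 powi q)) \<in> M" using g P unfolding good_def by blast
    hence "(inv (a [^] (int n * q)) \<otimes> a [^] j, inverse (c0 powi q) * c) \<in> M" using g jc unfolding good_def by blast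
    moreover have "inv (a [^] (int n * q)) \<otimes> a [^] j = a [^] r"
    proof -
      have "a [^] j = a [^] (int n * q) \<otimes> a [^] r" by (simp only: jqr int_pow_mult[OF a])
      thus ?thesis using a by (simp add: m_assoc[symmetric])
    qed
    ultimately have "a [^] r \<in> Domain M" by auto
    moreover have "r = int (nat r)" using r0 by simp
    ultimately have rD: "a [^] (nat r) \<in> Domain M" by (metis int_pow_int)
    have "r = 0"
    proof (rule ccontr)
      assume "r \<noteq> 0"
      hence "0 < nat r" using r0 by simp
      hence "n \<le> nat r" using nmin rD by blast
      moreover have "nat r < n" using r0 by simp
      ultimately show False by simp
    qed
    hence "j = int n * q" using jqr by simp
    hence "c = c0 powi q" using P jc g unfolding good_def by blast
    also have "\<dots> = w powi j" using w \<open>j = int n * q\<close>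
      by (simp only: power_int_mult power_int_of_nat)
    finally show "c = w powi j" .
  qed
next
  case False
  show ?thesis
  proof (intro exI conjI allI impI)
    show "cmod (1::complex) = 1" by simp
    fix j c assume jc: "(a [^] (j::int), c) \<in> M"
    have "j = 0"
    proof (rule ccontr)
      assume "j \<noteq> 0"
      show False
      proof (cases "j > 0")
        case True
        have "a [^] j = a [^] (nat j)" using True by (simp only: int_pow_def2 not_less[symmetric] less_imp_le if_False) simp
        hence "a [^] (nat j) \<in> Domain M" using jc by (metis Domain.DomainI)
        moreover have "0 < nat j" using True by simp
        ultimately show False using False by blast
      next
        case f2: False
        have "(inv (a [^] j), inverse c) \<in> M" using g jc unfolding good_def by blast
        moreover have "inv (a [^] j) = a [^] (nat (-j))" using f2 \<open>j \<noteq> 0\<close> a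
          by (metis int_nat_eq int_pow_int int_pow_neg minus_minus neg_0_le_iff_le not_less)
        ultimately have "a [^] (nat (-j)) \<in> Domain M" by auto
        moreover have "0 < nat (-j)" using f2 \<open>j \<noteq> 0\<close> by simp
        ultimately show False using False by blast
      qed
    qed
    have "(\<one>, 1) \<in> M" using good_one[OF g jc] .
    thus "c = 1 powi j" using jc g \<open>j = 0\<close> unfolding good_def by auto
  qed
qed

end


context comm_group begin

lemma cancel_aux: "k \<in> carrier G \<Longrightarrow> k' \<in> carrier G \<Longrightarrow> A \<in> carrier G \<Longrightarrow> B \<in> carrier G \<Longrightarrow> k \<otimes> A = k' \<otimes> B \<Longrightarrow> inv k \<otimes> k' = A \<otimes> inv B"
  by (metis (no_types, lifting) inv_closed inv_solve_left m_ac(1,2) m_closed)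

lemma good_extend:
  assumes g: "good G H psi M" and a: "a \<in> carrier G" and ne: "M \<noteq> {}"
  shows "\<exists>M'. good G H psi M' \<and> M \<subseteq> M' \<and> a \<in> Domain M'"
proof -
  obtain w where w1: "cmod w = 1" and wj: "\<And>j c. (a [^] (j::int), c) \<in> M \<Longrightarrow> c = w powi j"
    using good_w[OF g a] by blast
  have w0: "w \<noteq> 0" using w1 by auto
  have dom: "\<And>k c. (k,c) \<in> M \<Longrightarrow> k \<in> carrier G" using g unfolding good_def by blast
  define M' where "M' = {(k \<otimes> a [^] (m::int), c * w powi m) | k c m. (k,c) \<in> M}"
  have sv: "y = y'" if h1: "(x,y) \<in> M'" and h2: "(x,y') \<in> M'" for x y y'
  proof -
    obtain k c m where 1: "(k,c) \<in> M" "x = k \<otimes> a [^] (m::int)" "y = c * w powi m" using h1 unfolding M'_def by blast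
    obtain k' c' m' where 2: "(k',c') \<in> M" "x = k' \<otimes> a [^] (m'::int)" "y' = c' * w powi m'" using h2 unfolding M'_def by blast
    have k: "k \<in> carrier G" "k' \<in> carrier G" using 1 2 dom by auto
    have "(inv k, inverse c) \<in> M" using g 1 unfolding good_def by blast
    hence "(inv k \<otimes> k', inverse c * c') \<in> M" using g 2 unfolding good_def by blast
    moreover have "inv k \<otimes> k' = a [^] m \<otimes> inv (a [^] m')"
    proof -
      have "k \<otimes> a [^] m = k' \<otimes> a [^] m'" using 1 2 by simp
      thus ?thesis using cancel_aux k a int_pow_closed by blast
    qed
    moreover have "a [^] (m - m') = a [^] m \<otimes> inv (a [^] m')" by (rule int_pow_diff[OF a])
    ultimately have "(a [^] (m - m'), inverse c * c') \<in> M" by simp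
    hence e: "inverse c * c' = w powi (m - m')" using wj by blast
    have "c \<noteq> 0" using g 1 unfolding good_def by fastforce
    hence "c' = c * (inverse c * c')" by simp
    hence "c' = c * w powi (m - m')" using e by simp
    hence "y' = c * (w powi (m - m') * w powi m')" using 2 by simp
    also have "\<dots> = c * w powi m" using w0 by (metis power_int_add diff_add_cancel)
    finally show ?thesis using 1 by simp
  qed
  have "good G H psi M'"
    unfolding good_def
  proof (intro conjI allI impI ballI)
    show "\<And>x y y'. (x,y) \<in> M' \<Longrightarrow> (x,y') \<in> M' \<Longrightarrow> y = y'" using sv by blast
    show "Domain M' \<subseteq> carrier G" unfolding M'_def using dom a by auto
  next
    fix x assume "x \<in> H"
    hence "(x, psi x) \<in> M" using g unfolding good_def by blast
    hence "(x \<otimes> a [^] (0::int), psi x * w powi 0) \<in> M'" unfolding M'_def by blast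
    thus "(x, psi x) \<in> M'" using dom \<open>(x, psi x) \<in> M\<close> by simp
  next
    fix x y assume "(x,y) \<in> M'"
    then obtain k c m where 1: "(k,c) \<in> M" "x = k \<otimes> a [^] (m::int)" "y = c * w powi m" unfolding M'_def by blast
    have "cmod c = 1" using g 1 unfolding good_def by blast
    thus "cmod y = 1" using 1 w1 by (simp add: norm_mult norm_power_int)
  next
    fix x y x' y' assume "(x,y) \<in> M'" "(x',y') \<in> M'"
    then obtain k c m k' c' m' where 1: "(k,c) \<in> M" "x = k \<otimes> a [^] (m::int)" "y = c * w powi m"
      and 2: "(k',c') \<in> M" "x' = k' \<otimes> a [^] (m'::int)" "y' = c' * w powi m'" unfolding M'_def by blast
    have k: "k \<in> carrier G" "k' \<in> carrier G" using 1 2 dom by auto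
    have "(k \<otimes> k', c * c') \<in> M" using g 1 2 unfolding good_def by blast
    hence "((k \<otimes> k') \<otimes> a [^] (m + m'), (c * c') * w powi (m + m')) \<in> M'" unfolding M'_def by blast
    moreover have "(k \<otimes> k') \<otimes> a [^] (m + m') = x \<otimes> x'" using 1 2 k a
      by (simp add: int_pow_mult m_ac)
    moreover have "(c * c') * w powi (m + m') = y * y'" using 1 2 w0 by (simp add: power_int_add)
    ultimately show "(x \<otimes> x', y * y') \<in> M'" by simp
  next
    fix x y assume "(x,y) \<in> M'"
    then obtain k c m where 1: "(k,c) \<in> M" "x = k \<otimes> a [^] (m::int)" "y = c * w powi m" unfolding M'_def by blast
    have k: "k \<in> carrier G" using 1 dom by auto
    have "(inv k, inverse c) \<in> M" using g 1 unfolding good_def by blast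
    hence "(inv k \<otimes> a [^] (-m), inverse c * w powi (-m)) \<in> M'" unfolding M'_def by blast
    moreover have "inv k \<otimes> a [^] (-m) = inv x" using 1 k a by (simp add: int_pow_neg inv_mult)
    moreover have "inverse c * w powi (-m) = inverse y" using 1 by (simp add: power_int_minus)
    ultimately show "(inv x, inverse y) \<in> M'" by simp
  qed
  moreover have "M \<subseteq> M'"
  proof
    fix p assume "p \<in> M"
    then obtain k c where p: "p = (k,c)" "(k,c) \<in> M" by (cases p) auto
    hence "(k \<otimes> a [^] (0::int), c * w powi 0) \<in> M'" unfolding M'_def by blast
    thus "p \<in> M'" using p dom by simp
  qed
  moreover have "a \<in> Domain M'"
  proof -
    obtain k c where kc: "(k,c) \<in> M" using ne by auto
    have "(\<one>, 1) \<in> M" using good_one[OF g kc] .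
    hence "(\<one> \<otimes> a [^] (1::int), 1 * w powi 1) \<in> M'" unfolding M'_def by blast
    thus ?thesis using a by auto
  qed
  ultimately show ?thesis by blast
qed

end


context comm_group begin

lemma good_union:
  assumes C: "C \<in> chains {R. good G H psi R \<and> M0 \<subseteq> R}" and ne: "C \<noteq> {}"
  shows "good G H psi (\<Union>C)"
proof -
  have gC: "\<And>R. R \<in> C \<Longrightarrow> good G H psi R" using C unfolding chains_def by blast
  have ch: "\<And>R S. R \<in> C \<Longrightarrow> S \<in> C \<Longrightarrow> R \<subseteq> S \<or> S \<subseteq> R"
    using C unfolding chains_def chain_subset_def by blast
  have two: "\<exists>R\<in>C. p \<in> R \<and> q \<in> R" if hp: "p \<in> \<Union>C" and hq: "q \<in> \<Union>C" for p q
  proof -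
    obtain R S where RS: "R \<in> C" "S \<in> C" "p \<in> R" "q \<in> S" using hp hq by blast
    show ?thesis
    proof (cases "R \<subseteq> S")
      case True thus ?thesis using RS by blast
    next
      case False
      hence "S \<subseteq> R" using ch[OF RS(1,2)] by blast
      thus ?thesis using RS by blast
    qed
  qed
  obtain R0 where R0: "R0 \<in> C" using ne by blast
  have 1: "\<forall>x y y'. (x,y)\<in>\<Union>C \<longrightarrow> (x,y')\<in>\<Union>C \<longrightarrow> y=y'"
  proof (intro allI impI)
    fix x y y' assume a1: "(x,y) \<in> \<Union>C" and a2: "(x,y') \<in> \<Union>C"
    obtain R where "R \<in> C" "(x,y) \<in> R" "(x,y') \<in> R" using two[OF a1 a2] by blast
    thus "y = y'" using good_sv[OF gC] by blast
  qed
  have 2: "Domain (\<Union>C) \<subseteq> carrier G"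
  proof
    fix x assume "x \<in> Domain (\<Union>C)"
    then obtain y R where "R \<in> C" "(x,y) \<in> R" by blast
    thus "x \<in> carrier G" using good_dom[OF gC] by blast
  qed
  have 3: "\<forall>x\<in>H. (x, psi x)\<in>\<Union>C" using good_H[OF gC[OF R0]] R0 by blast
  have 4: "\<forall>x y. (x,y)\<in>\<Union>C \<longrightarrow> cmod y = 1"
  proof (intro allI impI)
    fix x y assume "(x,y) \<in> \<Union>C"
    then obtain R where "R \<in> C" "(x,y) \<in> R" by blast
    thus "cmod y = 1" using good_cmod[OF gC] by blast
  qed
  have 5: "\<forall>x y x' y'. (x,y)\<in>\<Union>C \<longrightarrow> (x',y')\<in>\<Union>C \<longrightarrow> (x \<otimes> x', y*y')\<in>\<Union>C"
  proof (intro allI impI)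
    fix x y x' y' assume a1: "(x,y) \<in> \<Union>C" and a2: "(x',y') \<in> \<Union>C"
    obtain R where R: "R \<in> C" "(x,y) \<in> R" "(x',y') \<in> R" using two[OF a1 a2] by blast
    hence "(x \<otimes> x', y*y') \<in> R" using good_mult[OF gC[OF R(1)]] by blast
    thus "(x \<otimes> x', y*y') \<in> \<Union>C" using R(1) by blast
  qed
  have 6: "\<forall>x y. (x,y)\<in>\<Union>C \<longrightarrow> (inv x, inverse y)\<in>\<Union>C"
  proof (intro allI impI)
    fix x y assume "(x,y) \<in> \<Union>C"
    then obtain R where R: "R \<in> C" "(x,y) \<in> R" by blast
    hence "(inv x, inverse y) \<in> R" using good_inv[OF gC[OF R(1)]] by blast
    thus "(inv x, inverse y) \<in> \<Union>C" using R(1) by blast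
  qed
  show ?thesis unfolding good_def using 1 2 3 4 5 6 by blast
qed

lemma char_extend:
  assumes H: "subgroup H G" and psi: "psi \<in> hom (G\<lparr>carrier := H\<rparr>) circle_group"
  shows "\<exists>chi \<in> hom G circle_group. \<forall>x\<in>H. chi x = psi x"
proof -
  have ps1: "cmod (psi x) = 1" if "x \<in> H" for x
  proof -
    have "psi x \<in> carrier circle_group" using hom_in_carrier[OF psi, of x] that by simp
    thus ?thesis by (simp add: circle_group_def)
  qed
  have psm: "psi (x \<otimes> y) = psi x * psi y" if "x \<in> H" "y \<in> H" for x y
  proof -
    have "psi (x \<otimes>\<^bsub>G\<lparr>carrier := H\<rparr>\<^esub> y) = psi x \<otimes>\<^bsub>circle_group\<^esub> psi y"
      using hom_mult[OF psi, of x y] that by simp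
    thus ?thesis by (simp add: circle_group_def)
  qed
  have Hc: "\<And>x. x \<in> H \<Longrightarrow> x \<in> carrier G" using H subgroup.subset by blast
  have o: "\<one> \<in> H" using subgroup.one_closed[OF H] .
  have psone: "psi \<one> = 1"
  proof -
    have e1: "psi (\<one> \<otimes> \<one>) = psi \<one> * psi \<one>" using psm[OF o o] .
    have e2: "\<one> \<otimes> \<one> = \<one>" by (rule l_one) simp
    have e: "psi \<one> = psi \<one> * psi \<one>" using e1 unfolding e2 .
    have "cmod (psi \<one>) = 1" using ps1[OF o] .
    hence "psi \<one> \<noteq> 0" by auto
    moreover have "psi \<one> = 0 \<or> psi \<one> = 1" using e by (simp only: mult_cancel_left1)
    ultimately show ?thesis by blast
  qed
  have psinv: "psi (inv x) = inverse (psi x)" if xH: "x \<in> H" for x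
  proof -
    have ix: "inv x \<in> H" using subgroup.m_inv_closed[OF H xH] .
    have e1: "psi (x \<otimes> inv x) = psi x * psi (inv x)" using psm[OF xH ix] .
    have e2: "x \<otimes> inv x = \<one>" using r_inv[OF Hc[OF xH]] .
    have "psi \<one> = psi x * psi (inv x)" using e1 unfolding e2 .
    hence "psi x * psi (inv x) = 1" unfolding psone by (rule sym)
    from inverse_unique[OF this] show ?thesis by (rule sym)
  qed
  define M0 where "M0 = {(x, psi x) | x. x \<in> H}"
  have M0I: "(x, psi x) \<in> M0" if "x \<in> H" for x unfolding M0_def using that by blast
  have M0E: "x \<in> H \<and> y = psi x" if "(x,y) \<in> M0" for x y using that unfolding M0_def by blast
  have 1: "\<forall>x y y'. (x,y)\<in>M0 \<longrightarrow> (x,y')\<in>M0 \<longrightarrow> y=y'" using M0E by metis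
  have 2: "Domain M0 \<subseteq> carrier G" using M0E Hc by blast
  have 3: "\<forall>x\<in>H. (x, psi x)\<in>M0" using M0I by blast
  have 4: "\<forall>x y. (x,y)\<in>M0 \<longrightarrow> cmod y = 1" using M0E ps1 by metis
  have 5: "\<forall>x y x' y'. (x,y)\<in>M0 \<longrightarrow> (x',y')\<in>M0 \<longrightarrow> (x \<otimes> x', y*y')\<in>M0"
  proof (intro allI impI)
    fix x y x' y' assume "(x,y) \<in> M0" "(x',y') \<in> M0"
    hence a: "x \<in> H" "x' \<in> H" "y = psi x" "y' = psi x'" using M0E by blast+
    have "x \<otimes> x' \<in> H" using subgroup.m_closed[OF H a(1,2)] .
    hence "(x \<otimes> x', psi (x \<otimes> x')) \<in> M0" by (rule M0I)
    thus "(x \<otimes> x', y*y') \<in> M0" using psm[OF a(1,2)] a(3,4) by simp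
  qed
  have 6: "\<forall>x y. (x,y)\<in>M0 \<longrightarrow> (inv x, inverse y)\<in>M0"
  proof (intro allI impI)
    fix x y assume "(x,y) \<in> M0"
    hence a: "x \<in> H" "y = psi x" using M0E by blast+
    have "inv x \<in> H" using subgroup.m_inv_closed[OF H a(1)] .
    hence "(inv x, psi (inv x)) \<in> M0" by (rule M0I)
    thus "(inv x, inverse y) \<in> M0" using psinv[OF a(1)] a(2) by simp
  qed
  have gM0: "good G H psi M0" unfolding good_def using 1 2 3 4 5 6 by blast
  define A where "A = {R. good G H psi R \<and> M0 \<subseteq> R}"
  have "\<forall>C\<in>chains A. \<exists>U\<in>A. \<forall>Z\<in>C. Z \<subseteq> U"
  proof
    fix C assume C: "C \<in> chains A"
    show "\<exists>U\<in>A. \<forall>Z\<in>C. Z \<subseteq> U"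
    proof (cases "C = {}")
      case True thus ?thesis using gM0 unfolding A_def by auto
    next
      case False
      have "\<Union>C \<in> A" using good_union[OF C[unfolded A_def] False] C False unfolding A_def chains_def by blast
      thus ?thesis by blast
    qed
  qed
  from Zorn_Lemma2[OF this] obtain M where M: "M \<in> A" and max: "\<And>Z. Z \<in> A \<Longrightarrow> M \<subseteq> Z \<Longrightarrow> Z = M" by blast
  have gM: "good G H psi M" and M0M: "M0 \<subseteq> M" using M unfolding A_def by auto
  have "\<one> \<in> H" using H subgroup.one_closed by blast
  hence neM: "M \<noteq> {}" using M0M unfolding M0_def by blast
  have domM: "Domain M = carrier G"
  proof
    show "Domain M \<subseteq> carrier G" using gM good_dom by fastforce
    show "carrier G \<subseteq> Domain M"
    proof
      fix a assume a: "a \<in> carrier G"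
      show "a \<in> Domain M"
      proof (rule ccontr)
        assume "a \<notin> Domain M"
        obtain M' where "good G H psi M'" "M \<subseteq> M'" "a \<in> Domain M'" using good_extend[OF gM a neM] by blast
        moreover have "M' \<in> A" using calculation M0M unfolding A_def by blast
        ultimately show False using max \<open>a \<notin> Domain M\<close> by blast
      qed
    qed
  qed
  define chi where "chi x = (THE y. (x,y) \<in> M)" for x
  have chiM: "(x, chi x) \<in> M" if xG: "x \<in> carrier G" for x
  proof -
    obtain y where y: "(x,y) \<in> M" using xG domM by blast
    have "(THE y. (x,y) \<in> M) = y" using y good_sv[OF gM] by (intro the_equality) blast+
    thus ?thesis using y chi_def by simp
  qed
  have chi_eq: "chi x = y" if xy: "(x,y) \<in> M" for x y
  proof -
    have "x \<in> carrier G" using good_dom[OF gM xy] .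
    from chiM[OF this] show ?thesis using good_sv[OF gM _ xy] by blast
  qed
  have "chi \<in> hom G circle_group"
    unfolding hom_def
  proof (intro CollectI conjI ballI Pi_I)
    fix x assume "x \<in> carrier G"
    hence "cmod (chi x) = 1" using chiM good_cmod[OF gM] by blast
    thus "chi x \<in> carrier circle_group" by (simp add: circle_group_def)
  next
    fix x y assume "x \<in> carrier G" "y \<in> carrier G"
    hence "(x \<otimes> y, chi x * chi y) \<in> M" using chiM good_mult[OF gM] by blast
    hence "chi (x \<otimes> y) = chi x * chi y" by (rule chi_eq)
    thus "chi (x \<otimes>\<^bsub>G\<^esub> y) = chi x \<otimes>\<^bsub>circle_group\<^esub> chi y"
      by (simp add: circle_group_def)
  qed
  moreover have "\<forall>x\<in>H. chi x = psi x"
  proof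
    fix x assume "x \<in> H"
    hence "(x, psi x) \<in> M" using M0M unfolding M0_def by blast
    thus "chi x = psi x" by (rule chi_eq)
  qed
  ultimately show ?thesis by blast
qed

end



theorem proposition7p5:
  fixes G :: "('a, 'b) monoid_scheme"
  assumes "comm_group G"
  shows "hereditarily_g_reversible G (bohr_topology G)"
proof -
  interpret comm_group G by fact
  define S where "S = {{x \<in> carrier G. chi x \<in> U} | chi U. chi \<in> hom G circle_group \<and> open U}"
  have T: "bohr_topology G = topology_generated_by S" unfolding bohr_topology_def S_def ..
  have one_hom: "(\<lambda>x. 1::complex) \<in> hom G circle_group" unfolding hom_def circle_group_def by simp
  have "{x \<in> carrier G. (\<lambda>x. 1::complex) x \<in> UNIV} \<in> S" unfolding S_def using one_hom open_UNIV by blast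
  hence cS: "carrier G \<in> S" by simp
  have "\<Union>S = carrier G"
  proof
    show "\<Union>S \<subseteq> carrier G" unfolding S_def by blast
    show "carrier G \<subseteq> \<Union>S" using cS by blast
  qed
  hence topT: "topspace (bohr_topology G) = carrier G" unfolding T by simp
  have openS: "openin (bohr_topology G) W" if "W \<in> S" for W
    unfolding T using that by (rule topology_generated_by_Basis)
  show ?thesis unfolding hereditarily_g_reversible_def g_reversible_def
  proof (intro allI impI)
    fix H f
    assume H: "subgroup H G"
      and f: "f \<in> iso (G\<lparr>carrier := H\<rparr>) (G\<lparr>carrier := H\<rparr>) \<and>
              continuous_map (subtopology (bohr_topology G) H) (subtopology (bohr_topology G) H) f"
    let ?X = "subtopology (bohr_topology G) H"
    have Hc: "H \<subseteq> carrier G" using subgroup.subset[OF H] .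
    have topX: "topspace ?X = H" unfolding topspace_subtopology topT using Hc by blast
    have grp: "group (G\<lparr>carrier := H\<rparr>)" using subgroup.subgroup_is_group[OF H is_group] .
    have fiso: "f \<in> iso (G\<lparr>carrier := H\<rparr>) (G\<lparr>carrier := H\<rparr>)" using f by blast
    have fbij: "bij_betw f H H" using fiso unfolding iso_def by simp
    define g where "g = inv_into H f"
    have "inv_into (carrier (G\<lparr>carrier := H\<rparr>)) f \<in> iso (G\<lparr>carrier := H\<rparr>) (G\<lparr>carrier := H\<rparr>)" using group.iso_set_sym[OF grp fiso] .
    hence ghom: "g \<in> hom (G\<lparr>carrier := H\<rparr>) (G\<lparr>carrier := H\<rparr>)" unfolding g_def iso_def by simp
    have gbij: "bij_betw g H H" unfolding g_def using bij_betw_inv_into[OF fbij] .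
    have gH: "\<And>y. y \<in> H \<Longrightarrow> g y \<in> H" using gbij bij_betwE by blast
    have gcontS: "continuous_map ?X (topology_generated_by S) g"
    proof (rule continuous_on_generated_topo)
      show "g ` topspace ?X \<subseteq> \<Union>S" using gH Hc topX \<open>\<Union>S = carrier G\<close> by blast
    next
      fix U assume "U \<in> S"
      then obtain chi V where U: "U = {x \<in> carrier G. chi x \<in> V}" and chi: "chi \<in> hom G circle_group"
        and V: "open V" unfolding S_def by blast
      have chiH: "chi \<in> hom (G\<lparr>carrier := H\<rparr>) circle_group"
      proof -
        have "\<And>x. x \<in> H \<Longrightarrow> chi x \<in> carrier circle_group" using hom_in_carrier[OF chi] Hc by blast
        moreover have "\<And>x y. x \<in> H \<Longrightarrow> y \<in> H \<Longrightarrow> chi (x \<otimes>\<^bsub>G\<^esub> y) = chi x \<otimes>\<^bsub>circle_group\<^esub> chi y"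
          using hom_mult[OF chi] Hc by blast
        ultimately show ?thesis unfolding hom_def by simp
      qed
      have psi: "chi \<circ> g \<in> hom (G\<lparr>carrier := H\<rparr>) circle_group"
        using Group.hom_compose[OF ghom chiH] .
      obtain chi' where chi': "chi' \<in> hom G circle_group" and ext: "\<forall>x\<in>H. chi' x = (chi \<circ> g) x"
        using char_extend[OF H psi] by blast
      have "{x \<in> carrier G. chi' x \<in> V} \<in> S" unfolding S_def using chi' V by blast
      hence op: "openin ?X (H \<inter> {x \<in> carrier G. chi' x \<in> V})"
        by (intro openin_subtopology_Int2 openS)
      have "g -` U \<inter> topspace ?X = H \<inter> {x \<in> carrier G. chi' x \<in> V}"
      proof
        show "g -` U \<inter> topspace ?X \<subseteq> H \<inter> {x \<in> carrier G. chi' x \<in> V}"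
        proof
          fix x assume "x \<in> g -` U \<inter> topspace ?X"
          hence x: "x \<in> H" "g x \<in> U" using topX by auto
          have "chi (g x) \<in> V" using x(2) unfolding U by blast
          moreover have "chi' x = chi (g x)" using ext x(1) by simp
          ultimately show "x \<in> H \<inter> {x \<in> carrier G. chi' x \<in> V}" using x(1) Hc by auto
        qed
        show "H \<inter> {x \<in> carrier G. chi' x \<in> V} \<subseteq> g -` U \<inter> topspace ?X"
        proof
          fix x assume "x \<in> H \<inter> {x \<in> carrier G. chi' x \<in> V}"
          hence x: "x \<in> H" "chi' x \<in> V" by auto
          have "chi' x = chi (g x)" using ext x(1) by simp
          hence "chi (g x) \<in> V" using x(2) by simp
          moreover have "g x \<in> carrier G" using gH[OF x(1)] Hc by blast
          ultimately have "g x \<in> U" unfolding U by blast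
          thus "x \<in> g -` U \<inter> topspace ?X" using x(1) topX by simp
        qed
      qed
      thus "openin ?X (g -` U \<inter> topspace ?X)" using op by simp
    qed
    have gcontB: "continuous_map ?X (bohr_topology G) g" using gcontS unfolding T .
    have gcont: "continuous_map ?X ?X g"
      unfolding continuous_map_in_subtopology
    proof
      show "continuous_map (subtopology (bohr_topology G) H) (bohr_topology G) g"
        using gcontB .
      show "g \<in> topspace (subtopology (bohr_topology G) H) \<rightarrow> H"
        using gH topX by blast
    qed
    have finj: "inj_on f H" using fbij by (rule bij_betw_imp_inj_on)
    have fim: "f ` H = H" using fbij by (rule bij_betw_imp_surj_on)
    show "open_map ?X ?X f" unfolding open_map_def
    proof (intro allI impI)
      fix U assume oU: "openin ?X U"
      have UH: "U \<subseteq> H" using openin_subset[OF oU] topX by simp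
      have "f ` U = {y \<in> topspace ?X. g y \<in> U}"
      proof
        show "f ` U \<subseteq> {y \<in> topspace ?X. g y \<in> U}"
        proof
          fix y assume "y \<in> f ` U"
          then obtain u where u: "u \<in> U" "y = f u" by blast
          have "u \<in> H" using u UH by blast
          hence "g y = u" unfolding g_def u(2) using inv_into_f_f[OF finj] by blast
          moreover have "y \<in> H" using \<open>u \<in> H\<close> fim u(2) by blast
          ultimately show "y \<in> {y \<in> topspace ?X. g y \<in> U}" using u topX by simp
        qed
        show "{y \<in> topspace ?X. g y \<in> U} \<subseteq> f ` U"
        proof
          fix y assume "y \<in> {y \<in> topspace ?X. g y \<in> U}"
          hence y: "y \<in> H" "g y \<in> U" using topX by auto
          have "f (g y) = y" unfolding g_def using f_inv_into_f[of y f H] y(1) fim by simp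
          thus "y \<in> f ` U" using y(2) by (metis imageI)
        qed
      qed
      thus "openin ?X (f ` U)" using openin_continuous_map_preimage[OF gcont oU] by simp
    qed
  qed
qed



end
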